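(* Let $\hat\rho$ be a density operator on $L^2(\mathbb R)$ with bounded Fock support. The following are equivalent: (i) $\hat\rho$ is an eigenvector of $\mathcal V_t$ for some $t>1$; (ii) $\hat\rho$ is an eigenvector of $\mathcal V_t$ for all $t\ge1$; (iii) there exists $m\in\mathbb N$ such that $W_{\hat\rho}(\alpha)\propto|\alpha|^{2m}e^{-2|\alpha|^2}$, and the corresponding eigenvalue is $t^m$; (iv) there exists $m\in\mathbb N$ such that $\hat\rho=\frac1{2^m}\sum_{k=0}^m\binom mk|k\rangle\langle k|$.
   Context: Let $\hat a$ be the annihilation operator on $L^2(\mathbb R)$, $\hat n=\hat a^\dagger\hat a$, $\{|k\rangle\}$ the Fock basis, $\hat D(\alpha)=\exp(\alpha\hat a^\dagger-\alpha^*\hat a)$, and $W_{\hat A}(\alpha)=\frac2\pi\mathrm{Tr}[\hat A\hat D(\alpha)(-1)^{\hat n}\hat D(\alpha)^\dagger]$ the Wigner function. An operator $\hat A$ has bounded Fock support if $\hat P_N\hat A\hat P_N=\hat A$ for some $N$, where $\hat P_N=\sum_{k=0}^N|k\rangle\langle k|$. For $t>0$, the Vertigo map on such operators is $\mathcal V_t[\hat A]=\sum_{k\ge0}\frac{(t-1)^k}{k!}t^{\hat n/2}\hat a^k\hat A\hat a^{\dagger k}t^{\hat n/2}$ (finite sum), equivalently $W_{\mathcal V_t[\hat A]}(\alpha)=W_{\hat A}(\sqrt t\alpha)e^{2(t-1)|\alpha|^2}$. "Eigenvector of $\mathcal V_t$" means $\mathcal V_t[\hat\rho]=\lambda\hat\rho$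 for some scalar $\lambda$. *)

theory Defs
  imports "HOL-Analysis.Analysis"
begin

text \<open>Operators with bounded Fock support are represented by their Fock-basis
matrix elements: A i j = <i|A|j>.\<close>
type_synonym fock_op = "nat \<Rightarrow> nat \<Rightarrow> complex"

definition bounded_fock_support :: "fock_op \<Rightarrow> bool" where
  "bounded_fock_support A \<longleftrightarrow> (\<exists>N. \<forall>i j. (N < i \<or> N < j) \<longrightarrow> A i j = 0)"

definition density_op :: "fock_op \<Rightarrow> bool" where
  "density_op A \<longleftrightarrow> bounded_fock_support A \<and>
     (\<forall>i j. A i j = cnj (A j i)) \<and>
     (\<forall>N. (\<forall>i j. (N < i \<or> N < j) \<longrightarrow> A i j = 0) \<longrightarrow>
        (\<forall>v :: nat \<Rightarrow> complex.
           0 \<le> Re (\<Sum>i\<le>N. \<Sum>j\<le>N. cnj (v i) * A i j * v j)) \<and>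
        (\<Sum>i\<le>N. A i i) = 1)"

text \<open>Vertigo map: matrix elements of
 sum_k (t-1)^k/k! t^(n/2) a^k A a^dagger^k t^(n/2), using
 a|n> = sqrt n |n-1>.  The sum ranges over the finitely many k contributing.\<close>
definition vertigo :: "real \<Rightarrow> fock_op \<Rightarrow> fock_op" where
  "vertigo t A = (\<lambda>i j. \<Sum>k\<in>{k. A (i+k) (j+k) \<noteq> 0}.
      complex_of_real ((t - 1) ^ k / fact k * t powr (real (i + j) / 2)
        * sqrt (fact (i + k) / fact i) * sqrt (fact (j + k) / fact j))
      * A (i+k) (j+k))"

text \<open>Fock matrix elements <m|D(alpha)|n> of the displacement operator, computed from
 D(alpha) = exp(-|alpha|^2/2) exp(alpha a^dagger) exp(-cnj alpha a).\<close>
definition displ :: "complex \<Rightarrow> nat \<Rightarrow> nat \<Rightarrow> complex" where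
  "displ \<alpha> m n = exp (- complex_of_real ((cmod \<alpha>)\<^sup>2 / 2)) *
     (\<Sum>k\<le>min m n. \<alpha> ^ (m - k) * (- cnj \<alpha>) ^ (n - k) *
        complex_of_real (sqrt (fact m * fact n) / (fact k * fact (m - k) * fact (n - k))))"

text \<open>Matrix element <j| D(alpha) (-1)^n D(alpha)^dagger |i>.\<close>
definition displaced_parity :: "complex \<Rightarrow> nat \<Rightarrow> nat \<Rightarrow> complex" where
  "displaced_parity \<alpha> j i = (\<Sum>l. displ \<alpha> j l * (-1) ^ l * cnj (displ \<alpha> i l))"

text \<open>Wigner function W_A(alpha) = 2/pi Tr[A D(alpha) (-1)^n D(alpha)^dagger].\<close>
definition wigner :: "fock_op \<Rightarrow> complex \<Rightarrow> complex" where
  "wigner A \<alpha> = complex_of_real (2 / pi) *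
     (\<Sum>(i, j)\<in>{(i, j). A i j \<noteq> 0}. A i j * displaced_parity \<alpha> j i)"

definition is_eigvec_vertigo :: "real \<Rightarrow> fock_op \<Rightarrow> bool" where
  "is_eigvec_vertigo t A \<longleftrightarrow> (\<exists>c::complex. vertigo t A = (\<lambda>i j. c * A i j))"

end

theory Submission
  imports Defs
begin


lemma vdm_complex:
  assumes "k \<le> l" "k' \<le> l"
  shows "(fact l / (fact (l-k) * fact (l-k')) :: complex) =
    (\<Sum>r\<le>min k k'. if k + k' \<le> l + r then fact k * fact k' /
        (fact r * fact (k-r) * fact (k'-r) * fact (l+r-k-k')) else 0)"
proof -
  have V: "(\<Sum>r\<le>k. (k' choose r) * ((l-k') choose (k - r))) = l choose k"
    using vandermonde[of k' "l-k'" k] assms by simp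
  have "(fact l / (fact (l-k) * fact (l-k')) :: complex) =
        of_nat (l choose k) * fact k / fact (l - k')"
    using assms by (simp add: binomial_fact field_simps)
  also have "\<dots> = (\<Sum>r\<le>k. of_nat (k' choose r) * of_nat ((l-k') choose (k - r)) * fact k / fact (l-k'))"
    unfolding V[symmetric] by (simp add: sum_distrib_right sum_divide_distrib)
  also have "\<dots> = (\<Sum>r\<le>k. if r \<le> k' \<and> k + k' \<le> l + r then fact k * fact k' /
        (fact r * fact (k-r) * fact (k'-r) * fact (l+r-k-k')) else 0)"
  proof (rule sum.cong[OF refl])
    fix r assume r: "r \<in> {..k}"
    show "of_nat (k' choose r) * of_nat ((l-k') choose (k - r)) * fact k / fact (l-k') =
      (if r \<le> k' \<and> k + k' \<le> l + r then fact k * fact k' /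
        (fact r * fact (k-r) * fact (k'-r) * fact (l+r-k-k')) else (0::complex))"
    proof (cases "r \<le> k' \<and> k + k' \<le> l + r")
      case True
      then have e: "l - k' - (k - r) = l+r-k-k'" using r by auto
      have b1: "(of_nat (k' choose r)::complex) = fact k' / (fact r * fact (k'-r))"
        using True by (simp add: binomial_fact)
      have b2: "(of_nat ((l-k') choose (k - r))::complex) = fact (l-k') / (fact (k-r) * fact (l+r-k-k'))"
        using True r assms by (subst binomial_fact) (simp_all only: e, auto)
      show ?thesis
      proof -
        have fe: "l + r - (k' + k) = l + r - (k + k')" by simp
        show ?thesis using True r assms
          by (simp add: b1 b2 field_simps fe)
      qed
    next
      case False
      then have "k' choose r = 0 \<or> (l-k') choose (k - r) = 0" using r assms by auto
      then show ?thesis using False by auto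
    qed
  qed
  also have "\<dots> = (\<Sum>r\<le>min k k'. if k + k' \<le> l + r then fact k * fact k' /
        (fact r * fact (k-r) * fact (k'-r) * fact (l+r-k-k')) else 0)"
    by (rule sum.mono_neutral_cong_right) auto
  finally show ?thesis .
qed

lemma exp_series_c: "(\<lambda>n. z^n / fact n) sums exp (z::complex)"
  using exp_converges[of z] by (simp add: scaleR_conv_of_real divide_inverse mult.commute)

lemma neg1_pow_parity: "even (a + b) \<Longrightarrow> (-1::complex)^a = (-1)^b"
  by (auto simp: minus_one_power_iff)

lemma ser:
  fixes x y :: complex
  shows "(\<lambda>l. if k \<le> l \<and> k' \<le> l then (-1)^l * (-y)^(l-k) * (-x)^(l-k') * (fact l / (fact (l-k) * fact (l-k'))) else 0) sums
    (exp (-(x*y)) * (\<Sum>r\<le>min k k'. (-1)^r * x^(k-r) * y^(k'-r) * (fact k * fact k' / (fact r * fact (k-r) * fact (k'-r)))))"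
proof -
  define C where "C r = (fact k * fact k' / (fact r * fact (k-r) * fact (k'-r)) :: complex)" for r
  define h where "h r l = (if k + k' \<le> l + r then (-1)^l * (-y)^(l-k) * (-x)^(l-k') * (C r / fact (l+r-k-k')) else 0)" for r l
  have f_eq: "(if k \<le> l \<and> k' \<le> l then (-1)^l * (-y)^(l-k) * (-x)^(l-k') * (fact l / (fact (l-k) * fact (l-k'))) else 0)
      = (\<Sum>r\<le>min k k'. h r l)" for l
  proof (cases "k \<le> l \<and> k' \<le> l")
    case True
    then show ?thesis
      unfolding vdm_complex[of k l k', OF conjunct1[OF True] conjunct2[OF True]] h_def C_def
      by (auto simp: sum_distrib_left intro!: sum.cong)
  next
    case False
    then have "h r l = 0" if "r \<in> {..min k k'}" for r using that unfolding h_def by auto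
    then have "(\<Sum>r\<le>min k k'. h r l) = 0" by (rule sum.neutral[rule_format]) 
    then show ?thesis using False by (simp only: if_False)
  qed
  have h_sums: "h r sums ((-1)^r * x^(k-r) * y^(k'-r) * C r * exp (-(x*y)))" if r: "r \<le> min k k'" for r
  proof -
    define s where "s = k + k' - r"
    have z: "h r i = 0" if "i < s" for i using that r unfolding h_def s_def by auto
    have hs: "h r (i+s) = ((-1)^r * x^(k-r) * y^(k'-r) * C r) * ((-(x*y))^i / fact i)" for i
    proof -
      have e1: "i + s - k = i + (k' - r)" and e2: "i + s - k' = i + (k - r)" and e3: "i + s + r - k - k' = i"
        and e4: "k + k' \<le> i + s + r"
        using r unfolding s_def by auto
      have sg: "(-1::complex)^(i+s) * (-1)^(i + (k' - r)) * (-1)^(i + (k - r)) = (-1)^r * (-1)^i"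
      proof -
        have "(-1::complex)^(i+s) * (-1)^(i + (k' - r)) * (-1)^(i + (k - r)) = (-1)^(i+s + (i + (k' - r)) + (i + (k - r)))"
          by (simp add: power_add)
        also have "\<dots> = (-1)^(r + i)"
          by (rule neg1_pow_parity) (use r in \<open>simp add: s_def; auto\<close>)
        finally show ?thesis by (simp add: power_add)
      qed
      have "h r (i+s) = (-1)^(i+s) * (-y)^(i + (k' - r)) * (-x)^(i + (k - r)) * (C r / fact i)"
        unfolding h_def using e1 e2 e3 e4 by simp
      also have "\<dots> = ((-1)^(i+s) * (-1)^(i + (k' - r)) * (-1)^(i + (k - r))) * y^(i + (k' - r)) * x^(i + (k - r)) * (C r / fact i)"
        by (simp add: power_minus[of y] power_minus[of x] mult_ac)
      also have "\<dots> = ((-1)^r * x^(k-r) * y^(k'-r) * C r) * ((-(x*y))^i / fact i)"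
        unfolding sg by (simp add: power_add power_minus[of "x*y"] power_mult_distrib mult_ac)
      finally show ?thesis .
    qed
    have "(\<lambda>i. h r (i+s)) sums (((-1)^r * x^(k-r) * y^(k'-r) * C r) * exp (-(x*y)))"
      unfolding hs by (rule sums_mult[OF exp_series_c])
    then show ?thesis using sums_zero_iff_shift[of s "h r"] z by simp
  qed
  have "(\<lambda>l. \<Sum>r\<le>min k k'. h r l) sums (\<Sum>r\<le>min k k'. (-1)^r * x^(k-r) * y^(k'-r) * C r * exp (-(x*y)))"
    by (rule sums_sum) (use h_sums in auto)
  then show ?thesis
    unfolding f_eq[symmetric] C_def by (simp add: sum_distrib_left mult_ac)
qed

lemma inv_fact_row: "(\<Sum>s\<le>n. 1 / (fact (n-s) * fact s)) = (2::complex)^n / fact n"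
proof -
  have "(\<Sum>s\<le>n. 1 / (fact (n-s) * fact s)) = (\<Sum>s\<le>n. of_nat (n choose s) / (fact n :: complex))"
    by (rule sum.cong) (auto simp: binomial_fact field_simps)
  also have "\<dots> = of_nat (\<Sum>s\<le>n. n choose s) / fact n"
    by (simp add: sum_divide_distrib)
  also have "\<dots> = 2^n / fact n" by (simp add: choose_row_sum)
  finally show ?thesis .
qed

lemma two_pow_sum:
  assumes "r \<le> j"
  shows "(\<Sum>k\<le>j. if r \<le> k then 1 / (fact (j-k) * fact (k-r)) else 0) = (2::complex)^(j-r) / fact (j-r)"
proof -
  have "(\<Sum>k\<le>j. if r \<le> k then 1 / (fact (j-k) * fact (k-r)) else (0::complex)) =
        (\<Sum>k\<in>{r..j}. 1 / (fact (j-k) * fact (k-r)))"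
    by (rule sum.mono_neutral_cong_right) auto
  also have "\<dots> = (\<Sum>s\<in>{0..j-r}. 1 / (fact (j-(s+r)) * fact (s+r-r)))"
    using sum.shift_bounds_cl_nat_ivl[of "\<lambda>k. 1 / (fact (j-k) * fact (k-r)) :: complex" 0 r "j-r"] assms
    by (simp add: add.commute)
  also have "\<dots> = (\<Sum>s\<le>j-r. 1 / (fact (j-r-s) * fact s))"
  proof (rule sum.cong)
    fix s assume "s \<in> {..j-r}"
    have "j-(s+r) = j-r-s" by simp
    then show "1 / (fact (j-(s+r)) * fact (s+r-r)) = (1 / (fact (j-r-s) * fact s) :: complex)" by simp
  qed auto
  also have "\<dots> = 2^(j-r) / fact (j-r)" by (rule inv_fact_row)
  finally show ?thesis .
qed

lemma fin_id:
  fixes x y Q :: complex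
  shows "(\<Sum>k\<le>j. \<Sum>k'\<le>i. x^(j-k) * y^(i-k') * Q / (fact k * fact (j-k) * fact k' * fact (i-k')) *
      (\<Sum>r\<le>min k k'. (-1)^r * x^(k-r) * y^(k'-r) * (fact k * fact k' / (fact r * fact (k-r) * fact (k'-r)))))
   = (\<Sum>r\<le>min i j. (-1)^r * (2*x)^(j-r) * (2*y)^(i-r) * Q / (fact r * fact (j-r) * fact (i-r)))"
proof -
  define T where "T r = (-1)^r * x^(j-r) * y^(i-r) * Q / fact r" for r
  define A where "A r k = (if r \<le> k then 1 / (fact (j-k) * fact (k-r)) else (0::complex))" for r k
  define B where "B r k' = (if r \<le> k' then 1 / (fact (i-k') * fact (k'-r)) else (0::complex))" for r k'
  have step1: "x^(j-k) * y^(i-k') * Q / (fact k * fact (j-k) * fact k' * fact (i-k')) *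
      (\<Sum>r\<le>min k k'. (-1)^r * x^(k-r) * y^(k'-r) * (fact k * fact k' / (fact r * fact (k-r) * fact (k'-r))))
      = (\<Sum>r\<le>min i j. T r * A r k * B r k')" if kk: "k \<le> j" "k' \<le> i" for k k'
  proof -
    have "x^(j-k) * y^(i-k') * Q / (fact k * fact (j-k) * fact k' * fact (i-k')) *
      (\<Sum>r\<le>min k k'. (-1)^r * x^(k-r) * y^(k'-r) * (fact k * fact k' / (fact r * fact (k-r) * fact (k'-r))))
      = (\<Sum>r\<le>min k k'. T r * A r k * B r k')"
      unfolding sum_distrib_left
    proof (rule sum.cong[OF refl])
      fix r assume r: "r \<in> {..min k k'}"
      have hx: "x^(j-r) = x^(j-k) * x^(k-r)" using r kk by (simp add: power_add[symmetric])
      have hy: "y^(i-r) = y^(i-k') * y^(k'-r)" using r kk by (simp add: power_add[symmetric])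
      show "x^(j-k) * y^(i-k') * Q / (fact k * fact (j-k) * fact k' * fact (i-k')) *
          ((-1)^r * x^(k-r) * y^(k'-r) * (fact k * fact k' / (fact r * fact (k-r) * fact (k'-r))))
          = T r * A r k * B r k'"
        using r unfolding T_def A_def B_def hx hy by (simp add: field_simps)
    qed
    also have "\<dots> = (\<Sum>r\<le>min i j. T r * A r k * B r k')"
      by (rule sum.mono_neutral_left) (use kk in \<open>auto simp: A_def B_def\<close>)
    finally show ?thesis .
  qed
  have "(\<Sum>k\<le>j. \<Sum>k'\<le>i. x^(j-k) * y^(i-k') * Q / (fact k * fact (j-k) * fact k' * fact (i-k')) *
      (\<Sum>r\<le>min k k'. (-1)^r * x^(k-r) * y^(k'-r) * (fact k * fact k' / (fact r * fact (k-r) * fact (k'-r)))))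
      = (\<Sum>k\<le>j. \<Sum>k'\<le>i. \<Sum>r\<le>min i j. T r * A r k * B r k')"
    using step1 by (auto intro!: sum.cong)
  also have "\<dots> = (\<Sum>k\<le>j. \<Sum>r\<le>min i j. \<Sum>k'\<le>i. T r * A r k * B r k')"
    by (rule sum.cong[OF refl], rule sum.swap)
  also have "\<dots> = (\<Sum>r\<le>min i j. \<Sum>k\<le>j. \<Sum>k'\<le>i. T r * A r k * B r k')"
    by (rule sum.swap)
  also have "\<dots> = (\<Sum>r\<le>min i j. T r * (\<Sum>k\<le>j. A r k) * (\<Sum>k'\<le>i. B r k'))"
  proof (rule sum.cong[OF refl])
    fix r
    have "T r * (\<Sum>k\<le>j. A r k) * (\<Sum>k'\<le>i. B r k') = T r * ((\<Sum>k\<le>j. A r k) * (\<Sum>k'\<le>i. B r k'))"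
      by (simp only: mult.assoc)
    also have "\<dots> = T r * (\<Sum>k\<le>j. \<Sum>k'\<le>i. A r k * B r k')" by (simp only: sum_product)
    also have "\<dots> = (\<Sum>k\<le>j. \<Sum>k'\<le>i. T r * A r k * B r k')" by (simp add: sum_distrib_left mult.assoc)
    finally show "(\<Sum>k\<le>j. \<Sum>k'\<le>i. T r * A r k * B r k') = T r * (\<Sum>k\<le>j. A r k) * (\<Sum>k'\<le>i. B r k')" by simp
  qed
  also have "\<dots> = (\<Sum>r\<le>min i j. T r * (2^(j-r) / fact (j-r)) * (2^(i-r) / fact (i-r)))"
    by (rule sum.cong[OF refl]) (simp add: A_def B_def two_pow_sum)
  also have "\<dots> = (\<Sum>r\<le>min i j. (-1)^r * (2*x)^(j-r) * (2*y)^(i-r) * Q / (fact r * fact (j-r) * fact (i-r)))"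
    by (rule sum.cong[OF refl]) (simp add: T_def power_mult_distrib field_simps)
  finally show ?thesis .
qed

definition Ef :: "complex \<Rightarrow> nat \<Rightarrow> nat \<Rightarrow> complex" where
  "Ef \<alpha> j i = (\<Sum>k\<le>min i j. (-1)^k * (2*\<alpha>)^(j-k) * (2*cnj \<alpha>)^(i-k) * of_real (sqrt (fact i * fact j))
      / (fact k * fact (j-k) * fact (i-k)))"

lemma displ_alt:
  "displ \<alpha> j l = of_real (exp (- ((cmod \<alpha>)^2/2))) *
    (\<Sum>k\<le>j. if k \<le> l then \<alpha>^(j-k) * (-cnj \<alpha>)^(l-k) * of_real (sqrt (fact j * fact l) / (fact k * fact (j-k) * fact (l-k))) else 0)"
proof -
  have e: "exp (- complex_of_real ((cmod \<alpha>)\<^sup>2 / 2)) = of_real (exp (- ((cmod \<alpha>)^2/2)))"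
    by (simp add: exp_of_real[symmetric])
  have s: "(\<Sum>k\<le>min j l. \<alpha> ^ (j - k) * (- cnj \<alpha>) ^ (l - k) *
        complex_of_real (sqrt (fact j * fact l) / (fact k * fact (j - k) * fact (l - k))))
     = (\<Sum>k\<le>j. if k \<le> l then \<alpha>^(j-k) * (-cnj \<alpha>)^(l-k) * of_real (sqrt (fact j * fact l) / (fact k * fact (j-k) * fact (l-k))) else 0)"
    by (rule sum.mono_neutral_cong_left) auto
  show ?thesis unfolding displ_def e s ..
qed

lemma term_prod:
  fixes x :: complex
  shows "(if k \<le> l then x^(j-k) * (-cnj x)^(l-k) * of_real (sqrt (fact j * fact l) / (fact k * fact (j-k) * fact (l-k))) else 0)
     * (-1)^l * cnj (if k' \<le> l then x^(i-k') * (-cnj x)^(l-k') * of_real (sqrt (fact i * fact l) / (fact k' * fact (i-k') * fact (l-k'))) else 0)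
   = (x^(j-k) * (cnj x)^(i-k') * of_real (sqrt (fact i * fact j)) / (fact k * fact (j-k) * fact k' * fact (i-k')))
     * (if k \<le> l \<and> k' \<le> l then (-1)^l * (-cnj x)^(l-k) * (-x)^(l-k') * (fact l / (fact (l-k) * fact (l-k'))) else 0)"
proof (cases "k \<le> l \<and> k' \<le> l")
  case True
  have sq: "sqrt (fact j * fact l) * sqrt (fact i * fact l) = sqrt (fact i * fact j) * (fact l :: real)"
    by (simp add: real_sqrt_mult)
  have sq': "complex_of_real (sqrt (fact j * fact l)) * complex_of_real (sqrt (fact i * fact l)) = of_real (sqrt (fact i * fact j)) * fact l"
    by (metis of_real_mult sq of_real_fact)
  have "(x^(j-k) * (-cnj x)^(l-k) * of_real (sqrt (fact j * fact l) / (fact k * fact (j-k) * fact (l-k))))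
     * (-1)^l * cnj (x^(i-k') * (-cnj x)^(l-k') * of_real (sqrt (fact i * fact l) / (fact k' * fact (i-k') * fact (l-k'))))
     = (x^(j-k) * (-cnj x)^(l-k) * (of_real (sqrt (fact j * fact l)) / (fact k * fact (j-k) * fact (l-k))))
     * (-1)^l * ((cnj x)^(i-k') * (-x)^(l-k') * (of_real (sqrt (fact i * fact l)) / (fact k' * fact (i-k') * fact (l-k'))))"
    by (simp add: of_real_divide)
  also have "\<dots> = (x^(j-k) * (cnj x)^(i-k') * of_real (sqrt (fact i * fact j)) / (fact k * fact (j-k) * fact k' * fact (i-k')))
     * ((-1)^l * (-cnj x)^(l-k) * (-x)^(l-k') * (fact l / (fact (l-k) * fact (l-k'))))"
    using sq' by (simp add: field_simps)
  finally show ?thesis using True by simp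
qed auto

lemma dp_formula:
  "displaced_parity \<alpha> j i = of_real (exp (- 2 * (cmod \<alpha>)^2)) * Ef \<alpha> j i"
proof -
  define x where "x = \<alpha>"
  define c0 where "c0 k k' = x^(j-k) * (cnj x)^(i-k') * of_real (sqrt (fact i * fact j)) / (fact k * fact (j-k) * fact k' * fact (i-k'))" for k k'
  define f where "f k k' l = (if k \<le> l \<and> k' \<le> l then (-1)^l * (-cnj x)^(l-k) * (-x)^(l-k') * (fact l / (fact (l-k) * fact (l-k'))) else 0)" for k k' l
  define S where "S k k' = (\<Sum>r\<le>min k k'. (-1)^r * x^(k-r) * (cnj x)^(k'-r) * (fact k * fact k' / (fact r * fact (k-r) * fact (k'-r))))" for k k'
  define e2 where "e2 = (of_real (exp (- ((cmod x)^2))) :: complex)"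
  define a where "a j l k = (if k \<le> l then x^(j-k) * (-cnj x)^(l-k) * of_real (sqrt (fact j * fact l) / (fact k * fact (j-k) * fact (l-k))) else 0)" for j l k
  have ee: "complex_of_real (exp (- ((cmod x)^2/2))) * cnj (complex_of_real (exp (- ((cmod x)^2/2)))) = e2"
    unfolding e2_def by (simp add: exp_add[symmetric] of_real_mult[symmetric] del: of_real_mult)
  have tm: "displ x j l * (-1)^l * cnj (displ x i l) = (\<Sum>k\<le>j. \<Sum>k'\<le>i. e2 * (c0 k k' * f k k' l))" for l
  proof -
    have "displ x j l * (-1)^l * cnj (displ x i l) =
      (complex_of_real (exp (- ((cmod x)^2/2))) * cnj (complex_of_real (exp (- ((cmod x)^2/2))))) *
      ((\<Sum>k\<le>j. a j l k) * (-1)^l * (\<Sum>k'\<le>i. cnj (a i l k')))"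
      unfolding displ_alt a_def by (simp add: mult_ac)
    also have "\<dots> = e2 * (\<Sum>k\<le>j. \<Sum>k'\<le>i. a j l k * (-1)^l * cnj (a i l k'))"
      unfolding ee by (simp add: sum_product sum_distrib_left sum_distrib_right mult_ac)
    also have "\<dots> = (\<Sum>k\<le>j. \<Sum>k'\<le>i. e2 * (c0 k k' * f k k' l))"
      unfolding a_def c0_def f_def term_prod sum_distrib_left ..
    finally show ?thesis .
  qed
  have "(\<lambda>l. \<Sum>k\<le>j. \<Sum>k'\<le>i. e2 * (c0 k k' * f k k' l)) sums
        (\<Sum>k\<le>j. \<Sum>k'\<le>i. e2 * (c0 k k' * (exp (-(x * cnj x)) * S k k')))"
  proof (rule sums_sum, rule sums_sum, rule sums_mult, rule sums_mult)
    fix k k'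
    show "f k k' sums (exp (-(x * cnj x)) * S k k')"
      unfolding f_def S_def by (rule ser)
  qed
  moreover have "(\<Sum>k\<le>j. \<Sum>k'\<le>i. e2 * (c0 k k' * (exp (-(x * cnj x)) * S k k'))) =
     e2 * exp (-(x * cnj x)) * (\<Sum>k\<le>j. \<Sum>k'\<le>i. c0 k k' * S k k')"
    by (simp add: sum_distrib_left mult_ac)
  moreover have "(\<Sum>k\<le>j. \<Sum>k'\<le>i. c0 k k' * S k k') = Ef x j i"
    unfolding c0_def S_def Ef_def by (rule fin_id)
  moreover have "e2 * exp (-(x * cnj x)) = of_real (exp (- 2 * (cmod x)^2))"
  proof -
    have h1: "x * cnj x = of_real ((cmod x)^2)" by (rule complex_norm_square[symmetric])
    have h2: "exp (- (x * cnj x)) = of_real (exp (- ((cmod x)^2)))"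
      unfolding h1 by (simp add: exp_of_real[symmetric])
    have h3: "exp (- ((cmod x)^2)) * exp (- ((cmod x)^2)) = exp (- 2 * (cmod x)^2)"
      by (simp add: exp_add[symmetric])
    show ?thesis unfolding e2_def h2 of_real_mult[symmetric] h3 ..
  qed
  ultimately have "(\<lambda>l. displ x j l * (-1)^l * cnj (displ x i l)) sums (of_real (exp (- 2 * (cmod x)^2)) * Ef x j i)"
    unfolding tm by simp
  then show ?thesis unfolding displaced_parity_def x_def by (rule sums_unique[symmetric])
qed



lemma infinite_unit_circle: "infinite (sphere (0::complex) 1)"
proof
  assume f: "finite (sphere (0::complex) 1)"
  have c: "connected (sphere (0::complex) 1)" by (rule connected_sphere) simp
  from connected_finite_iff_sing[OF c] f obtain a where "sphere (0::complex) 1 = {} \<or> sphere (0::complex) 1 = {a}"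
    by auto
  moreover have "1 \<in> sphere (0::complex) 1" "-1 \<in> sphere (0::complex) 1" by auto
  ultimately show False by auto
qed

lemma infinite_pos_reals_c: "infinite (complex_of_real ` {0<..})"
proof
  assume "finite (complex_of_real ` {0<..})"
  moreover have "inj_on complex_of_real {0<..}" by (auto simp: inj_on_def)
  ultimately have "finite {0::real<..}" using finite_imageD by blast
  then show False using infinite_Ioi by blast
qed

lemma poly_vanish:
  fixes c :: "'x \<Rightarrow> complex" and e :: "'x \<Rightarrow> nat"
  assumes S: "finite S" and Z: "infinite Z" and van: "\<And>z. z \<in> Z \<Longrightarrow> (\<Sum>x\<in>S. c x * z^(e x)) = 0"
  shows "(\<Sum>x\<in>{x\<in>S. e x = n}. c x) = 0"
proof -
  define M where "M = Max (e ` S \<union> {0})"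
  have eM: "e x \<le> M" if "x \<in> S" for x
    unfolding M_def using S that by (intro Max_ge) auto
  define d where "d n = (\<Sum>x\<in>{x\<in>S. e x = n}. c x)" for n
  have rep: "(\<Sum>x\<in>S. c x * z^(e x)) = (\<Sum>n\<le>M. d n * z^n)" for z
  proof -
    have "(\<Sum>x\<in>S. c x * z^(e x)) = (\<Sum>n\<le>M. \<Sum>x\<in>{x\<in>S. e x = n}. c x * z^(e x))"
      by (rule sum.group[symmetric]) (use S eM in auto)
    also have "\<dots> = (\<Sum>n\<le>M. d n * z^n)"
      unfolding d_def sum_distrib_right by (rule sum.cong) auto
    finally show ?thesis .
  qed
  show ?thesis
  proof (cases "n \<le> M")
    case True
    show ?thesis
    proof (rule ccontr)
      assume "(\<Sum>x\<in>{x\<in>S. e x = n}. c x) \<noteq> 0"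
      then have "d n \<noteq> 0" unfolding d_def .
      then have "finite {z. (\<Sum>i\<le>M. d i * z^i) = 0}"
        using polyfun_roots_finite[of d n M] True by blast
      moreover have "Z \<subseteq> {z. (\<Sum>i\<le>M. d i * z^i) = 0}" using van rep by auto
      ultimately show False using Z finite_subset by blast
    qed
  next
    case False
    then have "{x\<in>S. e x = n} = {}" using eM by fastforce
    then show ?thesis by (simp only: sum.empty)
  qed
qed

lemma down_induct:
  fixes N :: nat
  assumes "\<And>i. N < i \<Longrightarrow> P i"
    and "\<And>i. i \<le> N \<Longrightarrow> (\<And>i'. i < i' \<Longrightarrow> P i') \<Longrightarrow> P i"
  shows "P i"
proof (induction "N - i" arbitrary: i rule: less_induct)
  case less
  show ?case
  proof (cases "N < i")
    case True with assms(1) show ?thesis by blast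
  next
    case False
    show ?thesis
    proof (rule assms(2))
      show "i \<le> N" using False by simp
      fix i' assume ii: "i < i'"
      show "P i'"
      proof (cases "N < i'")
        case True then show ?thesis using assms(1) by blast
      next
        case False then show ?thesis using less[of i'] ii by simp
      qed
    qed
  qed
qed

definition QW :: "nat \<Rightarrow> fock_op \<Rightarrow> complex \<Rightarrow> complex" where
  "QW N A \<alpha> = (\<Sum>i\<le>N. \<Sum>j\<le>N. A i j * Ef \<alpha> j i)"

definition cf :: "fock_op \<Rightarrow> nat \<Rightarrow> nat \<Rightarrow> nat \<Rightarrow> complex" where
  "cf A i j k = (if k \<le> i \<and> k \<le> j then A i j * (-1)^k * 2^(j-k) * 2^(i-k) * of_real (sqrt (fact i * fact j))
      / (fact k * fact (j-k) * fact (i-k)) else 0)"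

lemma QW_triple:
  "QW N A \<alpha> = (\<Sum>(i,j,k)\<in>{..N}\<times>{..N}\<times>{..N}. cf A i j k * \<alpha>^(j-k) * cnj \<alpha>^(i-k))"
proof -
  have "QW N A \<alpha> = (\<Sum>i\<le>N. \<Sum>j\<le>N. \<Sum>k\<le>N. cf A i j k * \<alpha>^(j-k) * cnj \<alpha>^(i-k))"
    unfolding QW_def
  proof (intro sum.cong refl)
    fix i j assume i: "i \<in> {..N}" and j: "j \<in> {..N}"
    have "A i j * Ef \<alpha> j i = (\<Sum>k\<le>min i j. cf A i j k * \<alpha>^(j-k) * cnj \<alpha>^(i-k))"
      unfolding Ef_def sum_distrib_left
      by (rule sum.cong) (auto simp: cf_def power_mult_distrib field_simps)
    also have "\<dots> = (\<Sum>k\<le>N. cf A i j k * \<alpha>^(j-k) * cnj \<alpha>^(i-k))"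
      by (rule sum.mono_neutral_left) (use i j in \<open>auto simp: cf_def\<close>)
    finally show "A i j * Ef \<alpha> j i = (\<Sum>k\<le>N. cf A i j k * \<alpha>^(j-k) * cnj \<alpha>^(i-k))" .
  qed
  also have "\<dots> = (\<Sum>(i,j,k)\<in>{..N}\<times>{..N}\<times>{..N}. cf A i j k * \<alpha>^(j-k) * cnj \<alpha>^(i-k))"
    by (simp add: sum.cartesian_product)
  finally show ?thesis .
qed

lemma unit_pow:
  fixes u :: complex
  assumes "cmod u = 1" "b \<le> N"
  shows "u^a * cnj u^b * u^N = u^(a + N - b)"
proof -
  have "cnj u * u = 1" using assms(1) complex_norm_square[of u]
    by (simp add: mult.commute)
  then have cb: "cnj u^b * u^b = 1" by (metis power_mult_distrib power_one)
  have uN: "u^N = u^b * u^(N-b)" using assms(2) by (simp add: power_add[symmetric])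
  have ua: "u^(a + N - b) = u^a * u^(N-b)" using assms(2) by (simp add: power_add[symmetric])
  have "u^a * cnj u^b * u^N = u^a * (cnj u^b * u^b) * u^(N-b)" unfolding uN by (simp only: mult.assoc)
  also have "\<dots> = u^(a + N - b)" unfolding cb ua by simp
  finally show ?thesis .
qed

lemma QW_key:
  assumes van: "\<And>\<alpha>. QW N A \<alpha> = 0" and q0: "q0 \<le> N"
  shows "(\<Sum>x\<in>{x\<in>{..N}\<times>{..N}\<times>{..N}. (case x of (i,j,k) \<Rightarrow> j - k = p0 \<and> i - k = q0)}. (case x of (i,j,k) \<Rightarrow> cf A i j k)) = 0"
proof -
  define X where "X = {..N}\<times>{..N}\<times>{..N}"
  define P where "P x = (case x of (i,j,k) \<Rightarrow> j - k)" for x :: "nat \<times> nat \<times> nat"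
  define Qx where "Qx x = (case x of (i,j,k) \<Rightarrow> i - k)" for x :: "nat \<times> nat \<times> nat"
  define c where "c x = (case x of (i,j,k) \<Rightarrow> cf A i j k)" for x :: "nat \<times> nat \<times> nat"
  have fX: "finite X" unfolding X_def by simp
  have QN: "Qx x \<le> N" if "x \<in> X" for x using that unfolding X_def Qx_def by auto
  have rep: "QW N A \<alpha> = (\<Sum>x\<in>X. c x * \<alpha>^(P x) * cnj \<alpha>^(Qx x))" for \<alpha>
    unfolding QW_triple X_def P_def Qx_def c_def by (rule sum.cong) auto
  have step1: "(\<Sum>x\<in>{x\<in>X. P x + N - Qx x = d}. c x * of_real t ^ (P x + Qx x)) = 0" if t: "t > 0" for t d
  proof -
    have "(\<Sum>x\<in>X. (c x * of_real t ^ (P x + Qx x)) * u^(P x + N - Qx x)) = 0" if u: "u \<in> sphere 0 1" for u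
    proof -
      have cu: "cmod u = 1" using u by simp
      have "0 = QW N A (of_real t * u) * u^N" using van by simp
      also have "\<dots> = (\<Sum>x\<in>X. c x * (of_real t * u)^(P x) * cnj (of_real t * u)^(Qx x) * u^N)"
        unfolding rep sum_distrib_right ..
      also have "\<dots> = (\<Sum>x\<in>X. (c x * of_real t ^ (P x + Qx x)) * u^(P x + N - Qx x))"
      proof (rule sum.cong[OF refl])
        fix x assume "x \<in> X"
        then have "Qx x \<le> N" by (rule QN)
        then have "u^(P x + N - Qx x) = u^(P x) * cnj u^(Qx x) * u^N" using unit_pow[OF cu] by simp
        then show "c x * (of_real t * u)^(P x) * cnj (of_real t * u)^(Qx x) * u^N = (c x * of_real t ^ (P x + Qx x)) * u^(P x + N - Qx x)"
        proof -
          have e1: "cnj (of_real t * u) = of_real t * cnj u" by simp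
          show ?thesis unfolding e1 power_mult_distrib \<open>u^(P x + N - Qx x) = u^(P x) * cnj u^(Qx x) * u^N\<close> power_add
            by (simp only: mult_ac)
        qed
      qed
      finally show ?thesis by simp
    qed
    then show ?thesis
      using poly_vanish[OF fX infinite_unit_circle, of "\<lambda>x. c x * of_real t ^ (P x + Qx x)" "\<lambda>x. P x + N - Qx x" d]
      by blast
  qed
  have step2: "(\<Sum>x\<in>{x\<in>{x\<in>X. P x + N - Qx x = d}. P x + Qx x = n}. c x) = 0" for d n
  proof -
    have "(\<Sum>x\<in>{x\<in>X. P x + N - Qx x = d}. c x * z ^ (P x + Qx x)) = 0" if "z \<in> complex_of_real ` {0<..}" for z
      using that step1 by auto
    then show ?thesis
      using poly_vanish[OF _ infinite_pos_reals_c, of "{x\<in>X. P x + N - Qx x = d}" c "\<lambda>x. P x + Qx x" n] fX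
      by auto
  qed
  have seteq: "{x\<in>{x\<in>X. P x + N - Qx x = p0 + N - q0}. P x + Qx x = p0 + q0} =
      {x\<in>X. (case x of (i,j,k) \<Rightarrow> j - k = p0 \<and> i - k = q0)}"
  proof -
    have "(P x + N - Qx x = p0 + N - q0 \<and> P x + Qx x = p0 + q0) \<longleftrightarrow> (P x = p0 \<and> Qx x = q0)" if "x \<in> X" for x
      using QN[OF that] q0 by auto
    then have "{x\<in>{x\<in>X. P x + N - Qx x = p0 + N - q0}. P x + Qx x = p0 + q0} = {x\<in>X. P x = p0 \<and> Qx x = q0}"
      by auto
    also have "\<dots> = {x\<in>X. (case x of (i,j,k) \<Rightarrow> j - k = p0 \<and> i - k = q0)}"
      unfolding P_def Qx_def by (auto split: prod.splits)
    finally show ?thesis .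
  qed
  have "(\<Sum>x\<in>{x\<in>X. (case x of (i,j,k) \<Rightarrow> j - k = p0 \<and> i - k = q0)}. c x) = 0"
    using step2[of "p0 + N - q0" "p0 + q0"] by (simp only: seteq)
  then show ?thesis unfolding X_def c_def .
qed



definition vc :: "real \<Rightarrow> nat \<Rightarrow> nat \<Rightarrow> nat \<Rightarrow> real" where
  "vc t i j k = (t - 1) ^ k / fact k * t powr (real (i + j) / 2)
        * sqrt (fact (i + k) / fact i) * sqrt (fact (j + k) / fact j)"

definition binst :: "nat \<Rightarrow> fock_op" where
  "binst m = (\<lambda>i j. if i = j \<and> i \<le> m then complex_of_real (real (m choose i) / 2 ^ m) else 0)"

lemma vertigo_bound:
  assumes "\<forall>i j. (B < i \<or> B < j) \<longrightarrow> A i j = 0"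
  shows "vertigo t A i j = (\<Sum>k\<le>B. complex_of_real (vc t i j k) * A (i+k) (j+k))"
  unfolding vertigo_def vc_def
proof (rule sum.mono_neutral_left)
  show "{k. A (i + k) (j + k) \<noteq> 0} \<subseteq> {..B}"
  proof
    fix k assume "k \<in> {k. A (i + k) (j + k) \<noteq> 0}"
    then show "k \<in> {..B}" using assms by (auto simp: not_le) (metis le_add2 le_less_trans not_le)
  qed
qed auto

lemma vc0: "t > 0 \<Longrightarrow> vc t i j 0 = t powr (real (i + j) / 2)"
  by (simp add: vc_def)

lemma binst_supp: "\<forall>i j. (m < i \<or> m < j) \<longrightarrow> binst m i j = 0"
  by (auto simp: binst_def)

lemma binst_vertigo_real:
  assumes t: "t > 0" and i: "i \<le> m"
  shows "(\<Sum>k\<le>m - i. vc t i i k * (real (m choose (i+k)) / 2^m)) = t^m * (real (m choose i) / 2^m)"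
proof -
  have "vc t i i k * (real (m choose (i+k)) / 2^m) = t^i * real (m choose i) / 2^m * (real ((m-i) choose k) * (t-1)^k * 1^(m-i-k))"
    if k: "k \<le> m - i" for k
  proof -
    have p: "t powr (real (i + i) / 2) = t^i" using t by (simp add: powr_realpow)
    have s: "sqrt (fact (i + k) / fact i) * sqrt (fact (i + k) / fact i) = (fact (i+k) / fact i :: real)"
      by (simp add: real_sqrt_mult[symmetric] )
    have cm: "(m choose (i+k)) * ((i+k) choose i) = (m choose i) * ((m - i) choose k)"
      using choose_mult[of i "i+k" m] k i by simp
    have cb: "real ((i+k) choose i) = fact (i+k) / (fact i * fact k)"
      by (simp add: binomial_fact)
    have "vc t i i k * (real (m choose (i+k)) / 2^m) = (t-1)^k * t^i / 2^m * (real (m choose (i+k)) * real ((i+k) choose i))"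
      unfolding vc_def p cb using s by (simp add: field_simps)
    also have "\<dots> = t^i * real (m choose i) / 2^m * (real ((m-i) choose k) * (t-1)^k * 1^(m-i-k))"
      unfolding of_nat_mult[symmetric] cm by (simp add: field_simps)
    finally show ?thesis .
  qed
  then have "(\<Sum>k\<le>m - i. vc t i i k * (real (m choose (i+k)) / 2^m)) =
      t^i * real (m choose i) / 2^m * (\<Sum>k\<le>m - i. real ((m-i) choose k) * (t-1)^k * 1^(m-i-k))"
    by (simp add: sum_distrib_left)
  also have "(\<Sum>k\<le>m - i. real ((m-i) choose k) * (t-1)^k * 1^(m-i-k)) = t^(m-i)"
    using binomial_ring[of "t-1" 1 "m-i"] by simp
  also have "t^i * real (m choose i) / 2^m * t^(m-i) = t^m * (real (m choose i) / 2^m)"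
    using i by (simp add: power_add[symmetric] field_simps)
  finally show ?thesis .
qed

lemma vertigo_binst:
  assumes t: "t > 0"
  shows "vertigo t (binst m) = (\<lambda>i j. complex_of_real (t ^ m) * binst m i j)"
proof (intro ext)
  fix i j
  have vb: "vertigo t (binst m) i j = (\<Sum>k\<le>m. complex_of_real (vc t i j k) * binst m (i+k) (j+k))"
    by (rule vertigo_bound[OF binst_supp])
  show "vertigo t (binst m) i j = complex_of_real (t ^ m) * binst m i j"
  proof (cases "i = j \<and> i \<le> m")
    case True
    then have j: "j = i" and i: "i \<le> m" by auto
    have "vertigo t (binst m) i j = (\<Sum>k\<le>m - i. complex_of_real (vc t i i k * (real (m choose (i+k)) / 2^m)))"
      unfolding vb unfolding j
      by (rule sum.mono_neutral_cong_right) (use i in \<open>auto simp: binst_def\<close>)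
    also have "\<dots> = complex_of_real (t^m * (real (m choose i) / 2^m))"
      unfolding of_real_sum[symmetric] binst_vertigo_real[OF t i] ..
    finally show ?thesis using True by (simp add: binst_def)
  next
    case False
    then have "binst m (i+k) (j+k) = 0" for k by (auto simp: binst_def)
    then have "vertigo t (binst m) i j = 0" unfolding vb by simp
    moreover have "binst m i j = 0" using False by (simp add: binst_def)
    ultimately show ?thesis by simp
  qed
qed

lemma binst_trace: "m \<le> N \<Longrightarrow> (\<Sum>i\<le>N. binst m i i) = 1"
proof -
  assume mN: "m \<le> N"
  have "(\<Sum>i\<le>N. binst m i i) = (\<Sum>i\<le>m. complex_of_real (real (m choose i) / 2 ^ m))"
    by (rule sum.mono_neutral_cong_right) (use mN in \<open>auto simp: binst_def\<close>)
  also have "\<dots> = complex_of_real ((\<Sum>i\<le>m. real (m choose i)) / 2^m)"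
    by (simp add: sum_divide_distrib)
  also have "(\<Sum>i\<le>m. real (m choose i)) = 2^m"
    using choose_row_sum[of m] by (metis of_nat_numeral of_nat_power of_nat_sum)
  finally show ?thesis by simp
qed



lemma down_induct':
  fixes N :: nat
  assumes "\<And>i. N < i \<Longrightarrow> P i"
    and "\<And>i. i \<le> N \<Longrightarrow> (\<And>i'. i < i' \<Longrightarrow> P i') \<Longrightarrow> P i"
  shows "P i"
proof (induction "N - i" arbitrary: i rule: less_induct)
  case less
  show ?case
  proof (cases "N < i")
    case True with assms(1) show ?thesis by blast
  next
    case False
    show ?thesis
    proof (rule assms(2))
      show "i \<le> N" using False by simp
      fix i' assume ii: "i < i'"
      show "P i'"
      proof (cases "N < i'")
        case True then show ?thesis using assms(1) by blast
      next
        case False then show ?thesis using less[of i'] ii by simp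
      qed
    qed
  qed
qed

lemma psd_row:
  assumes dens: "density_op \<rho>" and supp: "\<forall>i j. (N < i \<or> N < j) \<longrightarrow> \<rho> i j = 0" and z: "\<rho> i i = 0"
  shows "\<rho> i j = 0"
proof (cases "N < i \<or> N < j \<or> i = j")
  case True then show ?thesis using supp z by auto
next
  case False
  then have iN: "i \<le> N" "j \<le> N" "i \<noteq> j" by auto
  from dens have herm: "\<forall>a b. \<rho> a b = cnj (\<rho> b a)"
    and psd: "\<forall>v. 0 \<le> Re (\<Sum>a\<le>N. \<Sum>b\<le>N. cnj (v a) * \<rho> a b * v b)"
    unfolding density_op_def using supp by blast+
  define w where "w = \<rho> i j"
  show ?thesis
  proof (rule ccontr)
    assume "\<rho> i j \<noteq> 0"
    then have wn: "cmod w \<noteq> 0" unfolding w_def by simp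
    define r where "r = (Re (\<rho> j j) + 1) / (2 * (cmod w)^2)"
    define v where "v = (\<lambda>l. if l = i then - of_real r * w else if l = j then (1::complex) else 0)"
    have inner: "(\<Sum>b\<le>N. cnj (v a) * \<rho> a b * v b) = (\<Sum>b\<in>{i,j}. cnj (v a) * \<rho> a b * v b)" for a
      by (rule sum.mono_neutral_right) (use iN in \<open>auto simp: v_def\<close>)
    have "(\<Sum>a\<le>N. \<Sum>b\<le>N. cnj (v a) * \<rho> a b * v b) = (\<Sum>a\<le>N. \<Sum>b\<in>{i,j}. cnj (v a) * \<rho> a b * v b)"
      unfolding inner ..
    also have "\<dots> = (\<Sum>a\<in>{i,j}. \<Sum>b\<in>{i,j}. cnj (v a) * \<rho> a b * v b)"
      by (rule sum.mono_neutral_right) (use iN in \<open>auto simp: v_def\<close>)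
    also have "\<dots> = cnj (v i) * \<rho> i i * v i + cnj (v i) * \<rho> i j * v j + (cnj (v j) * \<rho> j i * v i + cnj (v j) * \<rho> j j * v j)"
      using iN by simp
    also have "\<dots> = - of_real r * (cnj w * w) - of_real r * (cnj w * w) + \<rho> j j"
      using iN z herm[rule_format, of j i] unfolding v_def w_def by (simp add: algebra_simps)
    also have "\<dots> = of_real (- 2 * r * (cmod w)^2) + \<rho> j j"
    proof -
      have cw: "cnj w * w = of_real ((cmod w)^2)" using complex_norm_square[of w] by (simp add: mult.commute)
      show ?thesis unfolding cw by simp
    qed
    finally have "Re (\<Sum>a\<le>N. \<Sum>b\<le>N. cnj (v a) * \<rho> a b * v b) = - 2 * r * (cmod w)^2 + Re (\<rho> j j)"
      by simp
    also have "\<dots> = -1" unfolding r_def using wn by (simp add: field_simps)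
    finally have neg: "Re (\<Sum>a\<le>N. \<Sum>b\<le>N. cnj (v a) * \<rho> a b * v b) = -1" .
    have "0 \<le> Re (\<Sum>a\<le>N. \<Sum>b\<le>N. cnj (v a) * \<rho> a b * v b)" using psd by blast
    then show False unfolding neg by simp
  qed
qed

lemma vsum_top:
  assumes supp: "\<forall>i j. (B < i \<or> B < j) \<longrightarrow> A i j = 0" and top: "\<forall>k>0. A (i+k) (j+k) = 0"
  shows "vertigo t A i j = complex_of_real (vc t i j 0) * A i j"
proof -
  have "vertigo t A i j = (\<Sum>k\<le>B. complex_of_real (vc t i j k) * A (i+k) (j+k))"
    by (rule vertigo_bound[OF supp])
  also have "\<dots> = (\<Sum>k\<in>{0}. complex_of_real (vc t i j k) * A (i+k) (j+k))"
    by (rule sum.mono_neutral_right) (use top in auto)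
  finally show ?thesis by simp
qed

lemma vertigo_lin:
  assumes sA: "\<forall>i j. (B < i \<or> B < j) \<longrightarrow> A i j = 0" and sC: "\<forall>i j. (B < i \<or> B < j) \<longrightarrow> C i j = 0"
  shows "vertigo t (\<lambda>i j. A i j - l * C i j) i j = vertigo t A i j - l * vertigo t C i j"
proof -
  have sD: "\<forall>i j. (B < i \<or> B < j) \<longrightarrow> A i j - l * C i j = 0" using sA sC by simp
  show ?thesis
    unfolding vertigo_bound[OF sD] vertigo_bound[OF sA] vertigo_bound[OF sC]
    by (simp add: sum_subtractf sum_distrib_left algebra_simps)
qed

lemma eig_bin:
  assumes dens: "density_op \<rho>" and t: "t > 1" and eig: "vertigo t \<rho> = (\<lambda>i j. c * \<rho> i j)"
  shows "\<exists>M. \<rho> = binst M"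
proof -
  obtain N where supp: "\<forall>i j. (N < i \<or> N < j) \<longrightarrow> \<rho> i j = 0"
    using dens unfolding density_op_def bounded_fock_support_def by blast
  have herm: "\<forall>a b. \<rho> a b = cnj (\<rho> b a)" using dens unfolding density_op_def by blast
  have tr: "(\<Sum>i\<le>N. \<rho> i i) = 1" using dens supp unfolding density_op_def by blast
  then obtain i0 where i0: "i0 \<le> N" "\<rho> i0 i0 \<noteq> 0"
    by (metis (no_types, lifting) atMost_iff sum.neutral zero_neq_one)
  define I where "I = {i. i \<le> N \<and> \<rho> i i \<noteq> 0}"
  have fI: "finite I" unfolding I_def by simp
  have neI: "I \<noteq> {}" using i0 unfolding I_def by auto
  define M where "M = Max I"
  have MI: "M \<in> I" unfolding M_def using fI neI by (rule Max_in)
  then have rMM: "\<rho> M M \<noteq> 0" unfolding I_def by simp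
  have diag0: "\<rho> i i = 0" if "M < i" for i
  proof (cases "i \<le> N")
    case True
    show ?thesis
    proof (rule ccontr)
      assume "\<rho> i i \<noteq> 0"
      then have "i \<in> I" using True unfolding I_def by simp
      then have "i \<le> M" unfolding M_def by (rule Max_ge[OF fI])
      then show False using that by simp
    qed
  next
    case False then show ?thesis using supp by simp
  qed
  have suppM: "\<forall>i j. (M < i \<or> M < j) \<longrightarrow> \<rho> i j = 0"
  proof (intro allI impI)
    fix i j assume "M < i \<or> M < j"
    then show "\<rho> i j = 0"
    proof
      assume "M < i" then have "\<rho> i i = 0" by (rule diag0)
      then show ?thesis by (rule psd_row[OF dens supp])
    next
      assume "M < j" then have "\<rho> j j = 0" by (rule diag0)
      then have "\<rho> j i = 0" by (rule psd_row[OF dens supp])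
      then show ?thesis using herm by (metis complex_cnj_zero)
    qed
  qed
  have t0: "t > 0" using t by simp
  have vc0': "vc t i j 0 = t powr (real (i + j) / 2)" for i j using vc0[OF t0] .
  have "c * \<rho> M M = vertigo t \<rho> M M" using eig by simp
  also have "\<dots> = complex_of_real (vc t M M 0) * \<rho> M M"
    by (rule vsum_top[OF suppM]) (use suppM in auto)
  also have "vc t M M 0 = t^M" unfolding vc0' using t0 by (simp add: powr_realpow)
  finally have cM: "c = complex_of_real (t^M)" using rMM by simp
  define l where "l = \<rho> M M * 2^M"
  define D where "D = (\<lambda>i j. \<rho> i j - l * binst M i j)"
  have sD: "\<forall>i j. (M < i \<or> M < j) \<longrightarrow> D i j = 0" using suppM binst_supp[of M] unfolding D_def by simp
  have vD: "vertigo t D i j = complex_of_real (t^M) * D i j" for i j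
  proof -
    have "vertigo t D i j = vertigo t \<rho> i j - l * vertigo t (binst M) i j"
      unfolding D_def by (rule vertigo_lin[OF suppM binst_supp])
    also have "\<dots> = complex_of_real (t^M) * D i j"
      unfolding eig vertigo_binst[OF t0] cM D_def by (simp add: algebra_simps)
    finally show ?thesis .
  qed
  have DMM: "D M M = 0" unfolding D_def l_def binst_def by simp
  have D0: "\<forall>j. D i j = 0" for i
  proof (induction i rule: down_induct'[where N=M])
    case (1 i) then show ?case using sD by simp
  next
    case (2 i)
    show ?case
    proof
      fix j
      show "D i j = 0"
      proof (cases "M < j")
        case True then show ?thesis using sD by simp
      next
        case False
        have "vertigo t D i j = complex_of_real (vc t i j 0) * D i j"
          by (rule vsum_top[OF sD]) (use 2 in auto)
        then have eq: "complex_of_real (t^M) * D i j = complex_of_real (t powr (real (i + j) / 2)) * D i j"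
          unfolding vD vc0' .
        show ?thesis
        proof (rule ccontr)
          assume Dn: "D i j \<noteq> 0"
          then have "complex_of_real (t^M) = complex_of_real (t powr (real (i + j) / 2))" using eq by simp
          then have "t^M = t powr (real (i + j) / 2)" by (rule of_real_eq_iff[THEN iffD1])
          then have "t powr real M = t powr (real (i + j) / 2)" using t0 by (simp add: powr_realpow)
          then have "real M = real (i + j) / 2" using powr_inj[of t] t by simp
          then have "real (2 * M) = real (i + j)" by simp
          then have "2 * M = i + j" by (simp only: of_nat_eq_iff)
          then have "i = M \<and> j = M" using 2(1) False by linarith
          then show False using Dn DMM by simp
        qed
      qed
    qed
  qed
  then have rho_eq: "\<rho> i j = l * binst M i j" for i j unfolding D_def by (metis eq_iff_diff_eq_0)
  have "1 = (\<Sum>i\<le>M. \<rho> i i)" using dens suppM unfolding density_op_def by metis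
  also have "\<dots> = l * (\<Sum>i\<le>M. binst M i i)" unfolding rho_eq sum_distrib_left ..
  also have "\<dots> = l" using binst_trace[of M M] by simp
  finally have "l = 1" by simp
  then have "\<rho> = binst M" using rho_eq by auto
  then show ?thesis by blast
qed



lemma QW_zero:
  assumes supp: "\<forall>i j. (N < i \<or> N < j) \<longrightarrow> A i j = 0" and van: "\<And>\<alpha>. QW N A \<alpha> = 0"
  shows "A i j = 0"
proof -
  have "\<forall>j. A i j = 0"
  proof (induction i rule: down_induct[where N=N])
    case (1 i) then show ?case using supp by simp
  next
    case (2 i)
    show ?case
    proof
      fix j
      show "A i j = 0"
      proof (cases "N < j")
        case True then show ?thesis using supp by simp
      next
        case False
        define T where "T = {x\<in>{..N}\<times>{..N}\<times>{..N}. (case x of (i',j',k) \<Rightarrow> j' - k = j \<and> i' - k = i)}"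
        have key: "(\<Sum>x\<in>T. (case x of (i',j',k) \<Rightarrow> cf A i' j' k)) = 0"
          unfolding T_def by (rule QW_key[OF van 2(1)])
        have "(\<Sum>x\<in>T. (case x of (i',j',k) \<Rightarrow> cf A i' j' k)) = (\<Sum>x\<in>{(i,j,0)}. (case x of (i',j',k) \<Rightarrow> cf A i' j' k))"
        proof (rule sum.mono_neutral_right)
          show "finite T" unfolding T_def by simp
          show "{(i, j, 0)} \<subseteq> T" unfolding T_def using 2(1) False by auto
          show "\<forall>x\<in>T - {(i, j, 0)}. (case x of (i', j', k) \<Rightarrow> cf A i' j' k) = 0"
          proof
            fix x assume x: "x \<in> T - {(i, j, 0)}"
            obtain i' j' k where xe: "x = (i',j',k)" by (cases x) auto
            show "(case x of (i', j', k) \<Rightarrow> cf A i' j' k) = 0"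
            proof (cases "k \<le> i' \<and> k \<le> j'")
              case True
              then have "i' = i + k" "j' = j + k" using x unfolding xe T_def by auto
              moreover have "k \<noteq> 0" using x True unfolding xe T_def by auto
              ultimately have "A i' j' = 0" using 2(2)[of i'] by simp
              then show ?thesis unfolding xe cf_def by simp
            qed (auto simp: xe cf_def)
          qed
        qed
        then have "cf A i j 0 = 0" using key by simp
        then show ?thesis unfolding cf_def by simp
      qed
    qed
  qed
  then show ?thesis by simp
qed

lemma wigner_fin:
  assumes supp: "\<forall>i j. (N < i \<or> N < j) \<longrightarrow> A i j = 0"
  shows "wigner A \<alpha> = complex_of_real (2 / pi) * (complex_of_real (exp (- 2 * (cmod \<alpha>)^2)) * QW N A \<alpha>)"
proof -
  have "(\<Sum>(i, j)\<in>{(i, j). A i j \<noteq> 0}. A i j * displaced_parity \<alpha> j i) =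
        (\<Sum>(i, j)\<in>{..N}\<times>{..N}. A i j * displaced_parity \<alpha> j i)"
  proof (rule sum.mono_neutral_left)
    have "A a b \<noteq> 0 \<Longrightarrow> a \<le> N \<and> b \<le> N" for a b using supp by (meson not_le)
    then show "{(i, j). A i j \<noteq> 0} \<subseteq> {..N} \<times> {..N}" by auto
  qed auto
  also have "\<dots> = (\<Sum>i\<le>N. \<Sum>j\<le>N. A i j * displaced_parity \<alpha> j i)"
    by (simp add: sum.cartesian_product)
  also have "\<dots> = complex_of_real (exp (- 2 * (cmod \<alpha>)^2)) * QW N A \<alpha>"
    unfolding QW_def dp_formula sum_distrib_left by (simp add: mult_ac)
  finally show ?thesis unfolding wigner_def by simp
qed

lemma alt_binom_sum: "(\<Sum>r\<le>n. of_nat (n choose r) * (-1::complex)^r) = (if n = 0 then 1 else 0)"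
proof -
  have "(\<Sum>r\<le>n. of_nat (n choose r) * (-1::complex)^r) = (-1 + 1)^n"
    using binomial_ring[of "-1::complex" 1 n] by simp
  then show ?thesis by simp
qed

lemma binsum:
  fixes w :: complex
  shows "(\<Sum>i\<le>m. of_nat (m choose i) * (\<Sum>k\<le>i. (-1)^k * of_nat (i choose k) * w^(i-k) / fact (i-k))) = w^m / fact m"
proof -
  have refl_i: "(\<Sum>k\<le>i. (-1)^k * of_nat (i choose k) * w^(i-k) / fact (i-k)) =
      (\<Sum>s\<le>m. if s \<le> i then (-1)^(i-s) * of_nat (i choose s) * w^s / fact s else 0)" if i: "i \<le> m" for i
  proof -
    have "(\<Sum>k\<le>i. (-1)^k * of_nat (i choose k) * w^(i-k) / fact (i-k)) =
        (\<Sum>k\<in>{0..i}. (-1)^k * of_nat (i choose k) * w^(i-k) / fact (i-k))"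
      by (simp add: atLeast0AtMost)
    also have "\<dots> = (\<Sum>s\<in>{0..i}. (-1)^(i-s) * of_nat (i choose (i-s)) * w^(i-(i-s)) / fact (i-(i-s)))"
      by (subst sum.atLeastAtMost_rev) simp
    also have "\<dots> = (\<Sum>s\<le>i. (-1)^(i-s) * of_nat (i choose s) * w^s / fact s)"
      by (rule sum.cong) (auto simp: atLeast0AtMost binomial_symmetric[symmetric])
    also have "\<dots> = (\<Sum>s\<le>m. if s \<le> i then (-1)^(i-s) * of_nat (i choose s) * w^s / fact s else 0)"
      by (rule sum.mono_neutral_cong_left) (use i in auto)
    finally show ?thesis .
  qed
  have inner: "(\<Sum>i\<le>m. if s \<le> i then of_nat (m choose i) * ((-1)^(i-s) * of_nat (i choose s)) else (0::complex))
      = (if s = m then 1 else 0)" if s: "s \<le> m" for s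
  proof -
    have alt: "(\<Sum>i\<in>{s..m}. of_nat ((m-s) choose (i-s)) * (-1::complex)^(i-s)) = (if m - s = 0 then 1 else 0)"
    proof -
      have "(\<Sum>i\<in>{s..m}. of_nat ((m-s) choose (i-s)) * (-1::complex)^(i-s)) = (\<Sum>r\<in>{0..m-s}. of_nat ((m-s) choose r) * (-1)^r)"
        using sum.shift_bounds_cl_nat_ivl[of "\<lambda>i. of_nat ((m-s) choose (i-s)) * (-1::complex)^(i-s)" 0 s "m-s"] s
        by simp
      also have "\<dots> = (if m - s = 0 then 1 else 0)"
        using alt_binom_sum[of "m-s"] by (simp add: atLeast0AtMost)
      finally show ?thesis .
    qed
    have "(\<Sum>i\<le>m. if s \<le> i then of_nat (m choose i) * ((-1)^(i-s) * of_nat (i choose s)) else (0::complex))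
        = (\<Sum>i\<in>{s..m}. of_nat (m choose s) * (of_nat ((m-s) choose (i-s)) * (-1)^(i-s)))"
    proof (rule sum.mono_neutral_cong_right)
      fix i assume "i \<in> {s..m}"
      then have "(m choose i) * (i choose s) = (m choose s) * ((m - s) choose (i - s))"
        using choose_mult[of s i m] by simp
      then have "(of_nat (m choose i) * of_nat (i choose s) :: complex) = of_nat (m choose s) * of_nat ((m - s) choose (i - s))"
        by (metis of_nat_mult)
      then show "(if s \<le> i then of_nat (m choose i) * ((-1)^(i-s) * of_nat (i choose s)) else (0::complex))
          = of_nat (m choose s) * (of_nat ((m-s) choose (i-s)) * (-1)^(i-s))"
        using \<open>i \<in> {s..m}\<close> by (simp add: mult_ac)
    qed auto
    also have "\<dots> = of_nat (m choose s) * (\<Sum>i\<in>{s..m}. of_nat ((m-s) choose (i-s)) * (-1::complex)^(i-s))"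
      by (simp add: sum_distrib_left)
    also have "\<dots> = of_nat (m choose s) * (if m - s = 0 then 1 else 0)" unfolding alt ..
    also have "\<dots> = (if s = m then 1 else 0)" using s by auto
    finally show ?thesis .
  qed
  have "(\<Sum>i\<le>m. of_nat (m choose i) * (\<Sum>k\<le>i. (-1)^k * of_nat (i choose k) * w^(i-k) / fact (i-k))) =
      (\<Sum>i\<le>m. \<Sum>s\<le>m. (w^s / fact s) * (if s \<le> i then of_nat (m choose i) * ((-1)^(i-s) * of_nat (i choose s)) else 0))"
    by (rule sum.cong[OF refl]) (auto simp: refl_i sum_distrib_left intro!: sum.cong)
  also have "\<dots> = (\<Sum>s\<le>m. (w^s / fact s) * (\<Sum>i\<le>m. if s \<le> i then of_nat (m choose i) * ((-1)^(i-s) * of_nat (i choose s)) else 0))"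
    by (subst sum.swap) (simp add: sum_distrib_left)
  also have "\<dots> = (\<Sum>s\<le>m. (w^s / fact s) * (if s = m then 1 else 0))"
    by (rule sum.cong[OF refl]) (simp add: inner)
  also have "\<dots> = w^m / fact m" by (simp add: if_distrib[of "\<lambda>x. _ * x"] cong: if_cong)
  finally show ?thesis .
qed

lemma Ef_diag: "Ef \<alpha> i i = (\<Sum>k\<le>i. (-1)^k * of_nat (i choose k) * (4 * (\<alpha> * cnj \<alpha>))^(i-k) / fact (i-k))"
  unfolding Ef_def
proof (rule sum.cong)
  fix k assume k: "k \<in> {..i}"
  have sq: "sqrt (fact i * fact i) = (fact i :: real)" by simp
  have c: "(of_nat (i choose k) :: complex) = fact i / (fact k * fact (i - k))"
    using k by (simp add: binomial_fact)
  show "(-1)^k * (2*\<alpha>)^(i-k) * (2*cnj \<alpha>)^(i-k) * complex_of_real (sqrt (fact i * fact i)) / (fact k * fact (i-k) * fact (i-k))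
      = (-1)^k * of_nat (i choose k) * (4 * (\<alpha> * cnj \<alpha>))^(i-k) / fact (i-k)"
  proof -
    have four: "(2::complex)^n * 2^n = 4^n" for n by (simp add: power_mult_distrib[symmetric])
    show ?thesis unfolding sq c by (simp add: power_mult_distrib field_simps four)
  qed
qed simp

lemma QW_binst:
  assumes mN: "m \<le> N"
  shows "QW N (binst m) \<alpha> = complex_of_real (2^m / fact m) * (\<alpha> * cnj \<alpha>)^m"
proof -
  have "QW N (binst m) \<alpha> = (\<Sum>i\<le>N. binst m i i * Ef \<alpha> i i)"
    unfolding QW_def
  proof (rule sum.cong[OF refl])
    fix i assume "i \<in> {..N}"
    have "(\<Sum>j\<le>N. binst m i j * Ef \<alpha> j i) = (\<Sum>j\<in>{i}. binst m i j * Ef \<alpha> j i)"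
      by (rule sum.mono_neutral_right) (use \<open>i \<in> {..N}\<close> in \<open>auto simp: binst_def\<close>)
    then show "(\<Sum>j\<le>N. binst m i j * Ef \<alpha> j i) = binst m i i * Ef \<alpha> i i" by simp
  qed
  also have "\<dots> = (\<Sum>i\<le>m. of_nat (m choose i) * Ef \<alpha> i i) / 2^m"
    unfolding sum_divide_distrib
    by (rule sum.mono_neutral_cong_right) (use mN in \<open>auto simp: binst_def\<close>)
  also have "\<dots> = (4 * (\<alpha> * cnj \<alpha>))^m / fact m / 2^m"
    unfolding Ef_diag binsum ..
  also have "\<dots> = complex_of_real (2^m / fact m) * (\<alpha> * cnj \<alpha>)^m"
  proof -
    have h4: "(4::complex)^m = 2^m * 2^m" by (simp add: power_mult_distrib[symmetric])
    have "(4 * (\<alpha> * cnj \<alpha>))^m = 4^m * (\<alpha> * cnj \<alpha>)^m" by (rule power_mult_distrib)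
    then show ?thesis unfolding h4 by (simp add: field_simps)
  qed
  finally show ?thesis .
qed



lemma QW_lin: "QW N (\<lambda>i j. A i j - l * B i j) \<alpha> = QW N A \<alpha> - l * QW N B \<alpha>"
  by (simp add: QW_def sum_subtractf sum_distrib_left algebra_simps)

lemma norm_pow_c: "complex_of_real (cmod \<alpha> ^ (2*m)) = (\<alpha> * cnj \<alpha>)^m"
proof -
  have eq: "cmod \<alpha> ^ (2*m) = ((cmod \<alpha>)^2)^m" by (simp add: power_mult)
  show ?thesis by (subst eq, subst of_real_power, subst complex_norm_square) (rule refl)
qed

lemma wig_binst:
  "wigner (binst m) \<alpha> = complex_of_real (2/pi * 2^m / fact m) * complex_of_real (cmod \<alpha> ^ (2*m) * exp (- 2 * (cmod \<alpha>)\<^sup>2))"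
proof -
  have "wigner (binst m) \<alpha> = complex_of_real (2 / pi) * (complex_of_real (exp (- 2 * (cmod \<alpha>)^2)) * QW m (binst m) \<alpha>)"
    by (rule wigner_fin[OF binst_supp])
  also have "\<dots> = complex_of_real (2 / pi) * (complex_of_real (exp (- 2 * (cmod \<alpha>)^2)) * (complex_of_real (2^m / fact m) * complex_of_real (cmod \<alpha> ^ (2*m))))"
    unfolding QW_binst[OF order_refl] norm_pow_c ..
  also have "\<dots> = complex_of_real (2/pi * 2^m / fact m) * complex_of_real (cmod \<alpha> ^ (2*m) * exp (- 2 * (cmod \<alpha>)\<^sup>2))"
    by (simp add: mult_ac)
  finally show ?thesis .
qed

lemma wig_to_bin:
  assumes dens: "density_op \<rho>"
    and W: "\<forall>\<alpha>. wigner \<rho> \<alpha> = c * complex_of_real (cmod \<alpha> ^ (2*m) * exp (- 2 * (cmod \<alpha>)\<^sup>2))"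
  shows "\<rho> = binst m"
proof -
  obtain N0 where supp0: "\<forall>i j. (N0 < i \<or> N0 < j) \<longrightarrow> \<rho> i j = 0"
    using dens unfolding density_op_def bounded_fock_support_def by blast
  define N where "N = max N0 m"
  have supp: "\<forall>i j. (N < i \<or> N < j) \<longrightarrow> \<rho> i j = 0" using supp0 unfolding N_def by auto
  have suppb: "\<forall>i j. (N < i \<or> N < j) \<longrightarrow> binst m i j = 0" using binst_supp[of m] unfolding N_def by auto
  have mN: "m \<le> N" unfolding N_def by simp
  have Qr: "QW N \<rho> \<alpha> = complex_of_real (pi/2) * c * (\<alpha> * cnj \<alpha>)^m" for \<alpha>
  proof -
    define E where "E = complex_of_real (exp (- 2 * (cmod \<alpha>)^2))"
    define K where "K = complex_of_real (cmod \<alpha> ^ (2*m))"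
    have e0: "E \<noteq> 0" unfolding E_def by simp
    have h: "complex_of_real (2/pi) * (E * QW N \<rho> \<alpha>) = c * (K * E)"
      using W wigner_fin[OF supp, of \<alpha>] unfolding E_def K_def by (metis of_real_mult)
    then have "(complex_of_real (2/pi) * QW N \<rho> \<alpha>) * E = (c * K) * E" by (simp only: mult_ac)
    then have h2: "complex_of_real (2/pi) * QW N \<rho> \<alpha> = c * K" using e0 by (rule mult_right_cancel[THEN iffD1, rotated])
    have pp: "complex_of_real (pi/2) * complex_of_real (2/pi) = 1"
      unfolding of_real_mult[symmetric] by simp
    have "QW N \<rho> \<alpha> = (complex_of_real (pi/2) * complex_of_real (2/pi)) * QW N \<rho> \<alpha>" unfolding pp by simp
    also have "\<dots> = complex_of_real (pi/2) * (c * K)" unfolding h2[symmetric] by (simp only: mult_ac)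
    finally show ?thesis unfolding K_def norm_pow_c by (simp only: mult_ac)
  qed
  define l where "l = complex_of_real (pi/2) * c * complex_of_real (fact m / 2^m)"
  define D where "D = (\<lambda>i j. \<rho> i j - l * binst m i j)"
  have sD: "\<forall>i j. (N < i \<or> N < j) \<longrightarrow> D i j = 0" using supp suppb unfolding D_def by simp
  have QD: "QW N D \<alpha> = 0" for \<alpha>
  proof -
    have "QW N D \<alpha> = QW N \<rho> \<alpha> - l * QW N (binst m) \<alpha>" unfolding D_def by (rule QW_lin)
    also have "\<dots> = 0" unfolding Qr QW_binst[OF mN] l_def
      by (simp add: field_simps)
    finally show ?thesis .
  qed
  have rho_eq: "\<rho> i j = l * binst m i j" for i j
    using QW_zero[OF sD QD, of i j] unfolding D_def by simp
  have "1 = (\<Sum>i\<le>N. \<rho> i i)" using dens supp unfolding density_op_def by metis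
  also have "\<dots> = l * (\<Sum>i\<le>N. binst m i i)" unfolding rho_eq sum_distrib_left ..
  also have "\<dots> = l" using binst_trace[OF mN] by simp
  finally have "l = 1" by simp
  then show ?thesis using rho_eq by auto
qed

theorem lemma11:
  fixes \<rho> :: fock_op
  assumes "density_op \<rho>"
  shows "((\<exists>t>1. is_eigvec_vertigo t \<rho>) \<longleftrightarrow> (\<forall>t\<ge>1. is_eigvec_vertigo t \<rho>))
       \<and> ((\<forall>t\<ge>1. is_eigvec_vertigo t \<rho>) \<longleftrightarrow>
            (\<exists>m::nat. \<exists>c::complex. \<forall>\<alpha>. wigner \<rho> \<alpha> =
                c * complex_of_real ((cmod \<alpha>) ^ (2 * m) * exp (- 2 * (cmod \<alpha>)\<^sup>2))))
       \<and> ((\<exists>m::nat. \<exists>c::complex. \<forall>\<alpha>. wigner \<rho> \<alpha> =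
                c * complex_of_real ((cmod \<alpha>) ^ (2 * m) * exp (- 2 * (cmod \<alpha>)\<^sup>2)))
          \<longleftrightarrow> (\<exists>m::nat. \<rho> = (\<lambda>i j. if i = j \<and> i \<le> m
                 then complex_of_real (real (m choose i) / 2 ^ m) else 0)))
       \<and> (\<forall>m::nat. \<forall>c::complex.
            (\<forall>\<alpha>. wigner \<rho> \<alpha> =
                c * complex_of_real ((cmod \<alpha>) ^ (2 * m) * exp (- 2 * (cmod \<alpha>)\<^sup>2)))
            \<longrightarrow> (\<forall>t\<ge>1. vertigo t \<rho> = (\<lambda>i j. complex_of_real (t ^ m) * \<rho> i j)))"
proof -
  note dens = assms
  have A: "\<exists>m. \<rho> = binst m" if "\<exists>t>1. is_eigvec_vertigo t \<rho>"
    using that eig_bin[OF dens] unfolding is_eigvec_vertigo_def by blast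
  have B: "\<forall>t\<ge>1. vertigo t \<rho> = (\<lambda>i j. complex_of_real (t ^ m) * \<rho> i j)" if "\<rho> = binst m" for m
    using that vertigo_binst by simp
  have B': "\<forall>t\<ge>1. is_eigvec_vertigo t \<rho>" if "\<rho> = binst m" for m
    using B[OF that] unfolding is_eigvec_vertigo_def by blast
  have C: "\<exists>c. \<forall>\<alpha>. wigner \<rho> \<alpha> = c * complex_of_real ((cmod \<alpha>) ^ (2 * m) * exp (- 2 * (cmod \<alpha>)\<^sup>2))"
    if "\<rho> = binst m" for m
    using that wig_binst by blast
  have D: "\<rho> = binst m" if "\<forall>\<alpha>. wigner \<rho> \<alpha> = c * complex_of_real ((cmod \<alpha>) ^ (2 * m) * exp (- 2 * (cmod \<alpha>)\<^sup>2))" for m c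
    by (rule wig_to_bin[OF dens that])
  have i_ii: "(\<exists>t>1. is_eigvec_vertigo t \<rho>) \<longleftrightarrow> (\<forall>t\<ge>1. is_eigvec_vertigo t \<rho>)"
  proof
    assume "\<exists>t>1. is_eigvec_vertigo t \<rho>"
    then obtain m where "\<rho> = binst m" using A by blast
    then show "\<forall>t\<ge>1. is_eigvec_vertigo t \<rho>" by (rule B')
  next
    assume "\<forall>t\<ge>1. is_eigvec_vertigo t \<rho>"
    then have "is_eigvec_vertigo 2 \<rho>" by simp
    then show "\<exists>t>1. is_eigvec_vertigo t \<rho>" by (intro exI[of _ 2]) simp
  qed
  show ?thesis
    unfolding binst_def[symmetric]
  proof (intro conjI)
    show "(\<exists>t>1. is_eigvec_vertigo t \<rho>) \<longleftrightarrow> (\<forall>t\<ge>1. is_eigvec_vertigo t \<rho>)" by (rule i_ii)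
    show "(\<forall>t\<ge>1. is_eigvec_vertigo t \<rho>) \<longleftrightarrow>
      (\<exists>m c. \<forall>\<alpha>. wigner \<rho> \<alpha> = c * complex_of_real (cmod \<alpha> ^ (2 * m) * exp (- 2 * (cmod \<alpha>)\<^sup>2)))"
    proof
      assume "\<forall>t\<ge>1. is_eigvec_vertigo t \<rho>"
      then obtain m where "\<rho> = binst m" using i_ii A by blast
      then show "\<exists>m c. \<forall>\<alpha>. wigner \<rho> \<alpha> = c * complex_of_real (cmod \<alpha> ^ (2 * m) * exp (- 2 * (cmod \<alpha>)\<^sup>2))"
        using C by blast
    next
      assume "\<exists>m c. \<forall>\<alpha>. wigner \<rho> \<alpha> = c * complex_of_real (cmod \<alpha> ^ (2 * m) * exp (- 2 * (cmod \<alpha>)\<^sup>2))"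
      then obtain m c where "\<forall>\<alpha>. wigner \<rho> \<alpha> = c * complex_of_real (cmod \<alpha> ^ (2 * m) * exp (- 2 * (cmod \<alpha>)\<^sup>2))" by blast
      then have "\<rho> = binst m" by (rule D)
      then show "\<forall>t\<ge>1. is_eigvec_vertigo t \<rho>" by (rule B')
    qed
    show "(\<exists>m c. \<forall>\<alpha>. wigner \<rho> \<alpha> = c * complex_of_real (cmod \<alpha> ^ (2 * m) * exp (- 2 * (cmod \<alpha>)\<^sup>2)))
        \<longleftrightarrow> (\<exists>m. \<rho> = binst m)"
      using C D by blast
    show "\<forall>m c. (\<forall>\<alpha>. wigner \<rho> \<alpha> = c * complex_of_real (cmod \<alpha> ^ (2 * m) * exp (- 2 * (cmod \<alpha>)\<^sup>2))) \<longrightarrow>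
        (\<forall>t\<ge>1. vertigo t \<rho> = (\<lambda>i j. complex_of_real (t ^ m) * \<rho> i j))"
      using B D by blast
  qed
qed


end
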